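(* Let $(X,\mathbb{A},d)$ be a complete $C^*$-algebra valued metric space, where $\mathbb{A}$ is a unital $C^*$-algebra. Let $T,S:X\to X$ be mappings such that $$d(T^n x,(ST)^n y)\preceq q(x,y)^n\,\delta(x,y)\quad\text{for all }x,y\in X,\ n\in\mathbb{N},$$ where $q:X\times X\to\acute{\mathbb{A}}_+$ satisfies $0\le\|q(x,y)\|<1$ for all $x,y\in X$ and $\delta:X\times X\to\mathbb{A}_+$ is a mapping, and $ST$ denotes the composition $S\circ T$. If $T$ and $ST$ are both orbitally continuous on $X$, then $T$ and $S$ have a unique common fixed point in $X$.
   Context: $\mathbb{A}$ denotes a unital $C^*$-algebra with unit $I$ and zero $\theta$. An element $a\in\mathbb{A}$ is positive, written $a\succeq\theta$, if $a^*=a$ and its spectrum is contained in $[0,\infty)$; $\mathbb{A}_+$ is the set of positive elements, and $a\succeq b$ means $a-b\succeq\theta$. $\acute{\mathbb{A}}_+$ denotes the set of positive elements of $\mathbb{A}$ that commute with every element of $\mathbb{A}$. A $C^*$-algebra valued metric space $(X,\mathbb{A},d)$ is a nonempty set $X$ with $d:X\times X\to\mathbb{A}$ such that for all $x,y,z\in X$: $d(x,y)\succeq\theta$, with $d(x,y)=\theta$ iff $x=y$; $d(x,y)=d(y,x)$; $d(x,y)\preceq d(x,z)+d(z,y)$. A sequence $\{x_n\}$ converges to $x$ if $\|d(x_n,x)\|\to0$, and is Cauchy if $\|d(x_n,x_m)\|\to0$ as $n,m\to\infty$; the space is complete if every Cauchy sequence converges to a point of $X$. A self-map $T$ of $X$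 is orbitally continuous at $u\in X$ if for every $x\in X$ and every increasing sequence of positive integers $\{n_i\}$, $\|d(T^{n_i}x,u)\|\to0$ implies $\|d(T^{n_i+1}x,Tu)\|\to0$ as $i\to\infty$; $T$ is orbitally continuous on $X$ if it is orbitally continuous at every $u\in X$. *)

theory Defs
  imports "HOL-Analysis.Analysis"
begin

text \<open>The complex scalar multiplication is a class
  parameter compatible with the real one.\<close>

class cstar_algebra = real_normed_algebra_1 + banach +
  fixes cstar :: "'a \<Rightarrow> 'a"
    and scaleC :: "complex \<Rightarrow> 'a \<Rightarrow> 'a"
  assumes scaleC_add_right: "scaleC c (x + y) = scaleC c x + scaleC c y"
    and scaleC_add_left: "scaleC (b + c) x = scaleC b x + scaleC c x"
    and scaleC_scaleC: "scaleC b (scaleC c x) = scaleC (b * c) x"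
    and scaleC_one: "scaleC 1 x = x"
    and scaleC_of_real: "scaleC (complex_of_real r) x = scaleR r x"
    and norm_scaleC: "norm (scaleC c x) = cmod c * norm x"
    and scaleC_mult_left: "scaleC c (x * y) = scaleC c x * y"
    and scaleC_mult_right: "scaleC c (x * y) = x * scaleC c y"
    and cstar_cstar: "cstar (cstar x) = x"
    and cstar_add: "cstar (x + y) = cstar x + cstar y"
    and cstar_scaleC: "cstar (scaleC c x) = scaleC (cnj c) (cstar x)"
    and cstar_mult: "cstar (x * y) = cstar y * cstar x"
    and cstar_identity: "norm (cstar x * x) = (norm x)\<^sup>2"

definition cspectrum :: "'a::cstar_algebra \<Rightarrow> complex set" where
  "cspectrum a = {l. \<not> (\<exists>b. b * (a - scaleC l 1) = 1 \<and> (a - scaleC l 1) * b = 1)}"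

definition cpositive :: "'a::cstar_algebra \<Rightarrow> bool" where
  "cpositive a \<longleftrightarrow> cstar a = a \<and> cspectrum a \<subseteq> complex_of_real ` {0..}"

definition cle :: "'a::cstar_algebra \<Rightarrow> 'a \<Rightarrow> bool" where
  "cle a b \<longleftrightarrow> cpositive (b - a)"

definition cpositive_central :: "'a::cstar_algebra \<Rightarrow> bool" where
  "cpositive_central a \<longleftrightarrow> cpositive a \<and> (\<forall>b. a * b = b * a)"

definition cstar_metric :: "('x \<Rightarrow> 'x \<Rightarrow> 'a::cstar_algebra) \<Rightarrow> bool" where
  "cstar_metric d \<longleftrightarrow>
     (\<forall>x y. cpositive (d x y) \<and> (d x y = 0 \<longleftrightarrow> x = y)) \<and>
     (\<forall>x y. d x y = d y x) \<and>
     (\<forall>x y z. cle (d x y) (d x z + d z y))"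

definition cstar_complete :: "('x \<Rightarrow> 'x \<Rightarrow> 'a::cstar_algebra) \<Rightarrow> bool" where
  "cstar_complete d \<longleftrightarrow>
     (\<forall>s::nat \<Rightarrow> 'x.
        (\<forall>e>0. \<exists>N. \<forall>n\<ge>N. \<forall>m\<ge>N. norm (d (s n) (s m)) < e) \<longrightarrow>
        (\<exists>x. (\<lambda>n. norm (d (s n) x)) \<longlonglongrightarrow> 0))"

definition orbitally_continuous_at ::
    "('x \<Rightarrow> 'x \<Rightarrow> 'a::cstar_algebra) \<Rightarrow> ('x \<Rightarrow> 'x) \<Rightarrow> 'x \<Rightarrow> bool" where
  "orbitally_continuous_at d T u \<longleftrightarrow>
     (\<forall>x (n::nat \<Rightarrow> nat). strict_mono n \<longrightarrow> (\<forall>i. 0 < n i) \<longrightarrow>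
        (\<lambda>i. norm (d ((T ^^ n i) x) u)) \<longlonglongrightarrow> 0 \<longrightarrow>
        (\<lambda>i. norm (d ((T ^^ (n i + 1)) x) (T u))) \<longlonglongrightarrow> 0)"

definition orbitally_continuous ::
    "('x \<Rightarrow> 'x \<Rightarrow> 'a::cstar_algebra) \<Rightarrow> ('x \<Rightarrow> 'x) \<Rightarrow> bool" where
  "orbitally_continuous d T \<longleftrightarrow> (\<forall>u. orbitally_continuous_at d T u)"

end

theory Submission
  imports Defs
begin



definition ofc :: "complex \<Rightarrow> 'a::cstar_algebra" where "ofc c = scaleC c 1"

lemma scaleC_eq: "scaleC c (x::'a::cstar_algebra) = ofc c * x"
  by (metis ofc_def mult_1_left scaleC_mult_left)

lemma ofc_comm: "ofc c * (x::'a::cstar_algebra) = x * ofc c"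
  by (metis ofc_def mult_1_left mult_1_right scaleC_mult_left scaleC_mult_right)

lemma ofc_add: "ofc (b + c) = ofc b + ofc c"
  by (simp add: ofc_def scaleC_add_left)

lemma ofc_mult: "ofc (b * c) = ofc b * ofc c"
  by (metis ofc_def scaleC_eq scaleC_scaleC)

lemma ofc_one[simp]: "ofc 1 = 1"
  by (simp add: ofc_def scaleC_one)

lemma ofc_of_real[simp]: "ofc (complex_of_real r) = of_real r"
  unfolding ofc_def by (subst scaleC_of_real) (simp add: of_real_def)

lemma ofc_zero[simp]: "ofc 0 = 0"
  using ofc_of_real[of 0] by simp

lemma ofc_minus: "ofc (- c) = - ofc c"
proof -
  have "ofc c + ofc (-c) = 0" using ofc_add[of c "-c"] by simp
  then show ?thesis by (metis minus_unique)
qed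

lemma ofc_diff: "ofc (b - c) = ofc b - ofc c"
  by (metis diff_conv_add_uminus ofc_add ofc_minus)

lemma norm_ofc[simp]: "norm (ofc c) = cmod c"
  by (simp add: ofc_def norm_scaleC)

lemma ofc_power: "ofc (c ^ n) = ofc c ^ n"
  by (induction n) (simp_all add: ofc_mult)

lemma ofc_scaleR: "(ofc (r *\<^sub>R c) :: 'a::cstar_algebra) = r *\<^sub>R ofc c"
proof -
  have "ofc (r *\<^sub>R c) = ofc (complex_of_real r * c)" by (simp add: scaleR_conv_of_real)
  also have "\<dots> = (of_real r :: 'a) * ofc c" by (simp add: ofc_mult)
  finally show ?thesis by (simp add: scaleR_conv_of_real)
qed

lemma bounded_linear_ofc_mult: "bounded_linear (\<lambda>c. ofc c * (y::'a::cstar_algebra))"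
proof
  show "ofc (b + c) * y = ofc b * y + ofc c * y" for b c by (simp add: ofc_add distrib_right)
  show "ofc (r *\<^sub>R b) * y = r *\<^sub>R (ofc b * y)" for r b by (simp add: ofc_scaleR)
  show "\<exists>K. \<forall>c. norm (ofc c * y) \<le> norm c * K"
    by (rule exI[of _ "norm y"]) (metis norm_mult_ineq norm_ofc)
qed

lemma ofc_inverse: "c \<noteq> 0 \<Longrightarrow> ofc c * ofc (inverse c) = 1"
  by (metis ofc_mult ofc_one right_inverse)

lemma cstar_one[simp]: "cstar 1 = (1::'a::cstar_algebra)"
  by (metis cstar_cstar cstar_mult mult_1_left mult_1_right)

lemma cstar_ofc: "cstar (ofc c) = ofc (cnj c)"
  by (simp add: ofc_def cstar_scaleC)

lemma cstar_zero[simp]: "cstar 0 = (0::'a::cstar_algebra)"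
  using cstar_add[of 0 0] by simp

lemma cstar_minus: "cstar (- x) = - cstar (x::'a::cstar_algebra)"
proof -
  have "cstar x + cstar (-x) = 0" using cstar_add[of x "-x"] by simp
  then show ?thesis by (metis minus_unique)
qed

lemma cstar_diff: "cstar (x - y) = cstar x - cstar (y::'a::cstar_algebra)"
  by (metis diff_conv_add_uminus cstar_add cstar_minus)

lemma cstar_power: "cstar (x ^ n) = cstar (x::'a::cstar_algebra) ^ n"
proof (induction n)
  case (Suc n)
  have "cstar (x ^ Suc n) = cstar (x ^ n * x)" by (simp add: power_commutes)
  also have "\<dots> = cstar x * cstar x ^ n" by (simp add: cstar_mult Suc)
  finally show ?case by simp
qed simp

lemma norm_selfadj_sq: "cstar (h::'a::cstar_algebra) = h \<Longrightarrow> norm (h * h) = (norm h)^2"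
  by (metis cstar_identity)

lemma norm_selfadj_pow2: "cstar (h::'a::cstar_algebra) = h \<Longrightarrow> norm (h ^ (2^j)) = (norm h) ^ (2^j)"
proof (induction j)
  case (Suc j)
  have sa: "cstar (h ^ (2^j)) = h ^ (2^j)" by (metis cstar_power Suc.prems)
  have "h ^ (2 ^ Suc j) = h ^ (2^j) * h ^ (2^j)" by (simp add: power_add[symmetric] mult_2)
  then have "norm (h ^ (2 ^ Suc j)) = (norm (h ^ (2^j)))^2" using norm_selfadj_sq[OF sa] by simp
  then show ?case using Suc by (simp add: power_mult[symmetric] mult.commute)
qed simp


lemma norm_ofc_mult[simp]: "norm (ofc c * (y::'a::cstar_algebra)) = cmod c * norm y"
  by (metis scaleC_eq norm_scaleC)

lemma norm3: "norm ((a::'a::real_normed_algebra) * b * c) \<le> norm a * norm b * norm c"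
proof -
  have "norm (a * b * c) \<le> norm (a * b) * norm c" by (rule norm_mult_ineq)
  also have "\<dots> \<le> norm a * norm b * norm c" by (rule mult_right_mono[OF norm_mult_ineq]) simp
  finally show ?thesis .
qed




definition isinv :: "'a::cstar_algebra \<Rightarrow> bool" where
  "isinv x \<longleftrightarrow> (\<exists>y. y * x = 1 \<and> x * y = 1)"

lemma isinv_one[simp]: "isinv (1::'a::cstar_algebra)"
  unfolding isinv_def by auto

lemma isinv_mult: "isinv a \<Longrightarrow> isinv b \<Longrightarrow> isinv (a * b)"
  unfolding isinv_def
proof (elim exE conjE)
  fix y z assume "y * a = 1" "a * y = 1" "z * b = 1" "b * z = 1"
  then have "(z * y) * (a * b) = 1 \<and> (a * b) * (z * y) = 1"
    by (metis mult.assoc mult_1_left)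
  then show "\<exists>w. w * (a * b) = 1 \<and> a * b * w = 1" by blast
qed

lemma isinv_ofc: "c \<noteq> 0 \<Longrightarrow> isinv (ofc c :: 'a::cstar_algebra)"
  unfolding isinv_def by (metis ofc_inverse ofc_comm)

lemma isinv_minus: "isinv a \<Longrightarrow> isinv (- a)"
  unfolding isinv_def by (metis minus_mult_minus)

lemma neumann:
  fixes z :: "'a::cstar_algebra"
  assumes "norm z < 1"
  shows "isinv (1 - z)"
proof -
  have sg: "summable (\<lambda>n. norm z ^ n)" by (rule summable_geometric) (use assms in simp)
  have s: "summable (\<lambda>n. z ^ n)"
    by (rule summable_comparison_test[OF _ sg]) (auto intro: norm_power_ineq)
  define S where "S = suminf (\<lambda>n. z ^ n)"
  have s1: "summable (\<lambda>n. z ^ Suc n)" using summable_ignore_initial_segment[OF s, of 1] by simp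
  have split: "S = 1 + suminf (\<lambda>n. z ^ Suc n)"
    unfolding S_def using suminf_split_head[OF s] by simp
  have "S * z = suminf (\<lambda>n. z ^ n * z)" unfolding S_def by (rule suminf_mult2[OF s])
  also have "\<dots> = suminf (\<lambda>n. z ^ Suc n)" by (simp add: power_commutes)
  finally have a: "S * (1 - z) = 1" using split by (simp add: algebra_simps)
  have "z * S = suminf (\<lambda>n. z * z ^ n)" unfolding S_def by (rule suminf_mult[OF s, symmetric])
  also have "\<dots> = suminf (\<lambda>n. z ^ Suc n)" by simp
  finally have b: "(1 - z) * S = 1" using split by (simp add: algebra_simps)
  show ?thesis unfolding isinv_def using a b by blast
qed

lemma isinv_shift:
  fixes h :: "'a::cstar_algebra"
  assumes "norm h < cmod l"
  shows "isinv (h - ofc l)"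
proof -
  have l0: "l \<noteq> 0" using assms norm_ge_zero[of h] by auto
  have "norm (ofc (inverse l) * h) \<le> cmod (inverse l) * norm h"
    by (metis norm_mult_ineq norm_ofc)
  also have "\<dots> < 1" using assms l0 by (simp add: norm_inverse norm_divide divide_simps mult.commute)
  finally have "isinv (1 - ofc (inverse l) * h)" by (rule neumann)
  then have "isinv (ofc (- l) * (1 - ofc (inverse l) * h))"
    by (intro isinv_mult isinv_ofc) (use l0 in auto)
  moreover have "ofc (- l) * (1 - ofc (inverse l) * h) = h - ofc l"
  proof -
    have "ofc (- l) * (ofc (inverse l) * h) = - h"
      proof -
      have "ofc (- l) * (ofc (inverse l) * h) = - (ofc l * ofc (inverse l) * h)"
        by (simp add: ofc_minus mult.assoc)
      then show ?thesis using ofc_inverse[OF l0, where 'a='a] by simp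
    qed
    then show ?thesis by (simp add: algebra_simps ofc_minus)
  qed
  ultimately show ?thesis by simp
qed

lemma isinv_unique_left:
  fixes a :: "'a::cstar_algebra"
  assumes "isinv a" "y * a = 1" "w * a = 1"
  shows "y = w"
proof -
  obtain v where v: "a * v = 1" using assms(1) unfolding isinv_def by blast
  have "y = y * (a * v)" using v by simp
  also have "\<dots> = w * (a * v)" using assms by (simp add: mult.assoc[symmetric])
  finally show ?thesis using v by simp
qed




locale gel =
  fixes x :: "'a::cstar_algebra" and \<rho> :: real
  assumes rho_pos: "\<rho> > 0"
    and invs: "\<And>\<mu>. cmod \<mu> < \<rho> \<Longrightarrow> isinv (1 - ofc \<mu> * x)"
begin

definition Rv :: "complex \<Rightarrow> 'a" where
  "Rv \<mu> = (SOME y. y * (1 - ofc \<mu> * x) = 1 \<and> (1 - ofc \<mu> * x) * y = 1)"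

lemma Rv: assumes "cmod \<mu> < \<rho>"
  shows "Rv \<mu> * (1 - ofc \<mu> * x) = 1" "(1 - ofc \<mu> * x) * Rv \<mu> = 1"
proof -
  have "\<exists>y. y * (1 - ofc \<mu> * x) = 1 \<and> (1 - ofc \<mu> * x) * y = 1"
    using invs[OF assms] unfolding isinv_def by blast
  then have "Rv \<mu> * (1 - ofc \<mu> * x) = 1 \<and> (1 - ofc \<mu> * x) * Rv \<mu> = 1"
    unfolding Rv_def by (rule someI_ex)
  then show "Rv \<mu> * (1 - ofc \<mu> * x) = 1" "(1 - ofc \<mu> * x) * Rv \<mu> = 1" by auto
qed

lemma Rv0: "Rv 0 = 1"
proof -
  have "Rv 0 * (1 - ofc 0 * x) = 1" using Rv(1)[of 0] rho_pos by simp
  then show ?thesis by simp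
qed

lemma resolvent_id:
  assumes "cmod \<mu> < \<rho>" "cmod \<nu> < \<rho>"
  shows "Rv \<nu> - Rv \<mu> = ofc (\<nu> - \<mu>) * (Rv \<nu> * x * Rv \<mu>)"
proof -
  have "Rv \<nu> = Rv \<nu> * ((1 - ofc \<mu> * x) * Rv \<mu>)" using Rv(2)[OF assms(1)] by simp
  moreover have "Rv \<mu> = (Rv \<nu> * (1 - ofc \<nu> * x)) * Rv \<mu>" using Rv(1)[OF assms(2)] by simp
  ultimately have "Rv \<nu> - Rv \<mu> = Rv \<nu> * ((ofc \<nu> - ofc \<mu>) * x) * Rv \<mu>"
    by (simp add: algebra_simps)
  also have "\<dots> = ofc (\<nu> - \<mu>) * (Rv \<nu> * x * Rv \<mu>)"
    by (simp add: ofc_diff[symmetric] mult.assoc[symmetric] ofc_comm[of "\<nu> - \<mu>" "Rv \<nu>"])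
  finally show ?thesis .
qed

lemma Rv_bound:
  assumes "cmod \<mu> < \<rho>" "cmod \<nu> < \<rho>" "cmod (\<nu> - \<mu>) * norm x * norm (Rv \<mu>) \<le> 1/2"
  shows "norm (Rv \<nu>) \<le> 2 * norm (Rv \<mu>)"
proof -
  have "norm (Rv \<nu>) = norm (Rv \<mu> + ofc (\<nu> - \<mu>) * (Rv \<nu> * x * Rv \<mu>))"
    using resolvent_id[OF assms(1,2)] by (metis add_diff_cancel_left' diff_add_cancel)
  also have "\<dots> \<le> norm (Rv \<mu>) + cmod (\<nu> - \<mu>) * (norm (Rv \<nu>) * norm x * norm (Rv \<mu>))"
    by (rule order_trans[OF norm_triangle_ineq]) (simp add: mult_left_mono norm3)
  also have "\<dots> = norm (Rv \<mu>) + norm (Rv \<nu>) * (cmod (\<nu> - \<mu>) * norm x * norm (Rv \<mu>))"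
    by (simp add: algebra_simps)
  also have "\<dots> \<le> norm (Rv \<mu>) + norm (Rv \<nu>) * (1/2)"
    by (rule add_left_mono, rule mult_left_mono[OF assms(3)]) simp
  finally show ?thesis by simp
qed

definition D :: "complex \<Rightarrow> 'a" where "D \<mu> = Rv \<mu> * x * Rv \<mu>"

lemma Rv_deriv:
  assumes "cmod \<mu> < \<rho>"
  shows "(Rv has_derivative (\<lambda>h. ofc h * D \<mu>)) (at \<mu>)"
  unfolding has_derivative_iff_norm
proof
  show "bounded_linear (\<lambda>h. ofc h * D \<mu>)" by (rule bounded_linear_ofc_mult)
  define C where "C = 2 * norm x ^ 2 * norm (Rv \<mu>) ^ 3"
  define d where "d = min (\<rho> - cmod \<mu>) (1 / (2 * (norm x * norm (Rv \<mu>) + 1)))"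
  have nn: "0 \<le> norm x * norm (Rv \<mu>)" by simp
  have d: "d > 0" unfolding d_def using assms nn by (simp add: add_nonneg_pos)
  have ev: "\<forall>\<^sub>F \<nu> in at \<mu>. norm (Rv \<nu> - Rv \<mu> - ofc (\<nu> - \<mu>) * D \<mu>) / norm (\<nu> - \<mu>) \<le> C * cmod (\<nu> - \<mu>)"
    unfolding eventually_at
  proof (intro exI[of _ d] conjI ballI impI)
    show "d > 0" by (rule d)
    fix \<nu> assume "\<nu> \<in> UNIV" "\<nu> \<noteq> \<mu> \<and> dist \<nu> \<mu> < d"
    then have ne: "\<nu> \<noteq> \<mu>" and dd: "cmod (\<nu> - \<mu>) < d" by (auto simp: dist_norm)
    have nu: "cmod \<nu> < \<rho>"
      using dd norm_triangle_ineq2[of \<nu> \<mu>] unfolding d_def by linarith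
    have small: "cmod (\<nu> - \<mu>) * norm x * norm (Rv \<mu>) \<le> 1/2"
    proof -
      have "cmod (\<nu> - \<mu>) \<le> 1 / (2 * (norm x * norm (Rv \<mu>) + 1))" using dd unfolding d_def by linarith
      then have "cmod (\<nu> - \<mu>) * (norm x * norm (Rv \<mu>)) \<le> 1 / (2 * (norm x * norm (Rv \<mu>) + 1)) * (norm x * norm (Rv \<mu>))"
        by (rule mult_right_mono) simp
      also have "\<dots> \<le> 1/2" by (simp add: divide_simps) (use nn in linarith)
      finally show ?thesis by (simp add: mult.assoc)
    qed
    have bnu: "norm (Rv \<nu>) \<le> 2 * norm (Rv \<mu>)" by (rule Rv_bound[OF assms nu small])
    have e1: "Rv \<nu> - Rv \<mu> - ofc (\<nu> - \<mu>) * D \<mu> = ofc (\<nu> - \<mu>) * ((Rv \<nu> - Rv \<mu>) * x * Rv \<mu>)"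
    proof -
      have "Rv \<nu> - Rv \<mu> - ofc (\<nu> - \<mu>) * D \<mu> = ofc (\<nu> - \<mu>) * (Rv \<nu> * x * Rv \<mu>) - ofc (\<nu> - \<mu>) * (Rv \<mu> * x * Rv \<mu>)"
        using resolvent_id[OF assms nu] by (simp add: D_def)
      also have "\<dots> = ofc (\<nu> - \<mu>) * ((Rv \<nu> - Rv \<mu>) * x * Rv \<mu>)" by (simp add: algebra_simps)
      finally show ?thesis .
    qed
    have n1: "norm (Rv \<nu> - Rv \<mu>) \<le> cmod (\<nu> - \<mu>) * (2 * norm (Rv \<mu>) * norm x * norm (Rv \<mu>))"
    proof -
      have "norm (Rv \<nu> - Rv \<mu>) \<le> cmod (\<nu> - \<mu>) * (norm (Rv \<nu>) * norm x * norm (Rv \<mu>))"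
        unfolding resolvent_id[OF assms nu] by (simp add: mult_left_mono norm3)
      also have "\<dots> \<le> cmod (\<nu> - \<mu>) * (2 * norm (Rv \<mu>) * norm x * norm (Rv \<mu>))"
        by (intro mult_left_mono mult_right_mono bnu) auto
      finally show ?thesis .
    qed
    have "norm (Rv \<nu> - Rv \<mu> - ofc (\<nu> - \<mu>) * D \<mu>) \<le> cmod (\<nu> - \<mu>) * (norm (Rv \<nu> - Rv \<mu>) * norm x * norm (Rv \<mu>))"
      unfolding e1 by (simp add: mult_left_mono norm3)
    also have "\<dots> \<le> cmod (\<nu> - \<mu>) * ((cmod (\<nu> - \<mu>) * (2 * norm (Rv \<mu>) * norm x * norm (Rv \<mu>))) * norm x * norm (Rv \<mu>))"
      by (intro mult_left_mono mult_right_mono n1) auto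
    also have "\<dots> = cmod (\<nu> - \<mu>) * (C * cmod (\<nu> - \<mu>))"
      by (simp add: C_def power2_eq_square power3_eq_cube algebra_simps)
    finally show "norm (Rv \<nu> - Rv \<mu> - ofc (\<nu> - \<mu>) * D \<mu>) / norm (\<nu> - \<mu>) \<le> C * cmod (\<nu> - \<mu>)"
      using ne by (simp add: divide_simps mult.commute)
  qed
  have lim: "((\<lambda>\<nu>. C * cmod (\<nu> - \<mu>)) \<longlongrightarrow> 0) (at \<mu>)"
    by (rule tendsto_eq_intros refl | simp)+ 
  show "((\<lambda>\<nu>. norm (Rv \<nu> - Rv \<mu> - ofc (\<nu> - \<mu>) * D \<mu>) / norm (\<nu> - \<mu>)) \<longlongrightarrow> 0) (at \<mu>)"
    by (rule Lim_null_comparison[OF _ lim]) (use ev in \<open>auto elim!: eventually_mono\<close>)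
qed

end



lemma bounded_linear_ofc: "bounded_linear (ofc :: complex \<Rightarrow> 'a::cstar_algebra)"
  using bounded_linear_ofc_mult[of "1::'a"] by simp

lemma ofc_pow_comm: "(ofc c * (y::'a::cstar_algebra)) ^ m = ofc (c ^ m) * y ^ m"
proof (induction m)
  case (Suc m)
  have "(ofc c * y) ^ Suc m = ofc c * y * (ofc (c ^ m) * y ^ m)" by (simp add: Suc)
  also have "\<dots> = ofc c * (y * ofc (c ^ m)) * y ^ m" by (simp add: mult.assoc)
  also have "\<dots> = ofc c * (ofc (c ^ m) * y) * y ^ m" by (simp add: ofc_comm[of "c^m" y])
  also have "\<dots> = ofc c * ofc (c ^ m) * (y * y ^ m)" by (simp add: mult.assoc)
  finally show ?case by (simp add: ofc_mult)
qed simp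

lemma geom_telescope: "(\<Sum>m<N. (z::'a::ring_1) ^ m) * (1 - z) = 1 - z ^ N"
proof (induction N)
  case (Suc N)
  have "(\<Sum>m<Suc N. z ^ m) * (1 - z) = (\<Sum>m<N. z ^ m) * (1 - z) + z ^ N * (1 - z)"
    by (simp add: distrib_right)
  also have "\<dots> = (1 - z ^ N) + z ^ N * (1 - z)" using Suc by simp
  also have "\<dots> = 1 - z ^ N * z" by (simp add: algebra_simps)
  finally show ?case by (simp add: power_commutes)
qed simp

context gel begin

definition K :: "nat \<Rightarrow> complex \<Rightarrow> 'a" where
  "K n \<mu> = ofc (inverse \<mu> ^ n) * D \<mu> + ofc (- of_nat n * inverse \<mu> ^ Suc n) * Rv \<mu>"

definition g :: "nat \<Rightarrow> complex \<Rightarrow> 'a" where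
  "g n \<mu> = ofc (inverse \<mu> ^ n) * Rv \<mu>"

lemma inv_pow_deriv:
  assumes "\<mu> \<noteq> 0"
  shows "((\<lambda>\<mu>. inverse \<mu> ^ n) has_field_derivative (- of_nat n * inverse \<mu> ^ Suc n)) (at \<mu>)"
proof -
  have "((\<lambda>\<mu>. inverse \<mu> ^ n) has_field_derivative (of_nat n * (- (inverse \<mu> ^ Suc (Suc 0)) * inverse \<mu> ^ (n - Suc 0)))) (at \<mu>)"
    by (rule DERIV_power[OF DERIV_inverse[OF assms]])
  moreover have "of_nat n * (- (inverse \<mu> ^ Suc (Suc 0)) * inverse \<mu> ^ (n - Suc 0)) = - of_nat n * inverse \<mu> ^ Suc n"
    by (cases n) (simp_all add: algebra_simps)
  ultimately show ?thesis by (rule DERIV_cong)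
qed

lemma g_deriv:
  assumes "cmod \<mu> < \<rho>" "\<mu> \<noteq> 0"
  shows "(g n has_derivative (\<lambda>h. ofc h * K n \<mu>)) (at \<mu>)"
proof -
  have f: "((\<lambda>\<mu>. ofc (inverse \<mu> ^ n) :: 'a) has_derivative (\<lambda>h. ofc (h * (- of_nat n * inverse \<mu> ^ Suc n)))) (at \<mu>)"
    using bounded_linear.has_derivative[OF bounded_linear_ofc inv_pow_deriv[OF assms(2), of n, unfolded has_field_derivative_def]]
    by (simp add: mult.commute)
  have "((\<lambda>\<mu>. ofc (inverse \<mu> ^ n) * Rv \<mu>) has_derivative
     (\<lambda>h. ofc (inverse \<mu> ^ n) * (ofc h * D \<mu>) + ofc (h * (- of_nat n * inverse \<mu> ^ Suc n)) * Rv \<mu>)) (at \<mu>)"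
    by (rule has_derivative_mult[OF f Rv_deriv[OF assms(1)]])
  moreover have "(\<lambda>h. ofc (inverse \<mu> ^ n) * (ofc h * D \<mu>) + ofc (h * (- of_nat n * inverse \<mu> ^ Suc n)) * Rv \<mu>)
      = (\<lambda>h. ofc h * K n \<mu>)"
  proof
    fix h
    have "ofc (inverse \<mu> ^ n) * (ofc h * D \<mu>) = ofc h * (ofc (inverse \<mu> ^ n) * D \<mu>)"
    proof -
      have "ofc (inverse \<mu> ^ n) * (ofc h * D \<mu>) = ofc (inverse \<mu> ^ n * h) * D \<mu>"
        by (simp add: ofc_mult mult.assoc)
      also have "\<dots> = ofc (h * inverse \<mu> ^ n) * D \<mu>" by (simp add: mult.commute)
      finally show ?thesis by (simp add: ofc_mult mult.assoc)
    qed
    then show "ofc (inverse \<mu> ^ n) * (ofc h * D \<mu>) + ofc (h * (- of_nat n * inverse \<mu> ^ Suc n)) * Rv \<mu> = ofc h * K n \<mu>"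
      by (simp add: K_def ofc_mult distrib_left mult.assoc ofc_minus right_diff_distrib)
  qed
  ultimately show ?thesis unfolding g_def by simp
qed

lemma g_vderiv:
  assumes "(\<gamma> has_vector_derivative \<gamma>') (at t within S)" "cmod (\<gamma> t) < \<rho>" "\<gamma> t \<noteq> 0"
  shows "((\<lambda>t. g n (\<gamma> t)) has_vector_derivative (ofc \<gamma>' * K n (\<gamma> t))) (at t within S)"
proof -
  have "((\<lambda>t. g n (\<gamma> t)) has_derivative (\<lambda>s. ofc (s *\<^sub>R \<gamma>') * K n (\<gamma> t))) (at t within S)"
    using has_derivative_compose[OF assms(1)[unfolded has_vector_derivative_def] g_deriv[OF assms(2,3)]] .
  then show ?thesis unfolding has_vector_derivative_def by (simp add: ofc_scaleR)
qed

lemma Rv_cont: "cmod \<mu> < \<rho> \<Longrightarrow> continuous (at \<mu>) Rv"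
  using Rv_deriv has_derivative_continuous by blast

lemma Rv_cont_on: "continuous_on (ball 0 \<rho>) Rv"
  by (rule continuous_at_imp_continuous_on) (auto intro: Rv_cont)

lemma K_cont_on: "continuous_on (ball 0 \<rho> - {0}) (K n)"
proof -
  have r: "continuous_on (ball 0 \<rho> - {0}) Rv" using Rv_cont_on by (rule continuous_on_subset) auto
  have o: "continuous_on S f \<Longrightarrow> continuous_on S (\<lambda>y. (ofc (f y) :: 'a))" for S f
    using bounded_linear.continuous_on[OF bounded_linear_ofc] by blast
  show ?thesis unfolding K_def D_def
    by (intro continuous_intros o r) auto
qed

lemma g_cont_on: "continuous_on (ball 0 \<rho> - {0}) (g n)"
proof -
  have r: "continuous_on (ball 0 \<rho> - {0}) Rv" using Rv_cont_on by (rule continuous_on_subset) auto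
  have o: "continuous_on S f \<Longrightarrow> continuous_on S (\<lambda>y. (ofc (f y) :: 'a))" for S f
    using bounded_linear.continuous_on[OF bounded_linear_ofc] by blast
  show ?thesis unfolding g_def
    by (intro continuous_intros o r) auto
qed

end



definition ee :: "real \<Rightarrow> complex" where "ee \<theta> = exp (\<i> * complex_of_real \<theta>)"

lemma norm_ee[simp]: "cmod (ee \<theta>) = 1" by (simp add: ee_def)
lemma ee0[simp]: "ee 0 = 1" by (simp add: ee_def)
lemma ee2pi[simp]: "ee (2 * pi) = 1" by (simp add: ee_def mult.commute)
lemma ee_nz[simp]: "ee \<theta> \<noteq> 0" by (simp add: ee_def)

lemma ee_cont: "continuous_on S ee"
  unfolding ee_def by (intro continuous_intros)

lemma vd_theta: "((\<lambda>\<theta>. complex_of_real r * ee \<theta>) has_vector_derivative (complex_of_real r * (\<i> * ee \<theta>))) (at \<theta> within S)"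
proof -
  have "((\<lambda>z. complex_of_real r * exp (\<i> * z)) has_field_derivative (complex_of_real r * (\<i> * exp (\<i> * complex_of_real \<theta>)))) (at (complex_of_real \<theta>))"
    by (rule derivative_eq_intros refl | simp)+
  from has_vector_derivative_real_field[OF this] show ?thesis unfolding ee_def .
qed

lemma vd_r: "((\<lambda>r. complex_of_real r * ee \<theta>) has_vector_derivative (ee \<theta>)) (at r within S)"
proof -
  have "((\<lambda>z. z * ee \<theta>) has_field_derivative (ee \<theta>)) (at (complex_of_real r))"
    by (rule derivative_eq_intros refl | simp)+
  from has_vector_derivative_real_field[OF this] show ?thesis .
qed

context gel begin

definition I :: "nat \<Rightarrow> real \<Rightarrow> 'a" where
  "I n r = integral {0..2*pi} (\<lambda>\<theta>. g n (complex_of_real r * ee \<theta>))"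

definition F :: "nat \<Rightarrow> real \<Rightarrow> real \<Rightarrow> 'a" where
  "F n r \<theta> = ofc (ee \<theta>) * K n (complex_of_real r * ee \<theta>)"

lemma in_disk: "0 < r \<Longrightarrow> r < \<rho> \<Longrightarrow> complex_of_real r * ee \<theta> \<in> ball 0 \<rho> - {0}"
  by (simp add: norm_mult)

lemma circ_cont: "continuous_on S (\<lambda>p. complex_of_real (fst p) * ee (snd p))"
  by (intro continuous_intros continuous_on_compose2[OF ee_cont]) auto

lemma g_circ_cont:
  assumes "0 < r" "r < \<rho>"
  shows "continuous_on S (\<lambda>\<theta>. g n (complex_of_real r * ee \<theta>))"
proof (rule continuous_on_compose2[OF g_cont_on])
  show "continuous_on S (\<lambda>\<theta>. complex_of_real r * ee \<theta>)" by (intro continuous_intros ee_cont)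
  show "(\<lambda>\<theta>. complex_of_real r * ee \<theta>) ` S \<subseteq> ball 0 \<rho> - {0}" using in_disk[OF assms] by auto
qed

lemma F_cont: "continuous_on ({0<..<\<rho>} \<times> S) (\<lambda>(r, \<theta>). F n r \<theta>)"
proof -
  have o: "continuous_on S f \<Longrightarrow> continuous_on S (\<lambda>y. (ofc (f y) :: 'a))" for S f
    using bounded_linear.continuous_on[OF bounded_linear_ofc] by blast
  have k: "continuous_on ({0<..<\<rho>} \<times> S) (\<lambda>p. K n (complex_of_real (fst p) * ee (snd p)))"
  proof (rule continuous_on_compose2[OF K_cont_on circ_cont])
    show "(\<lambda>p. complex_of_real (fst p) * ee (snd p)) ` ({0<..<\<rho>} \<times> S) \<subseteq> ball 0 \<rho> - {0}"
      using in_disk by auto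
  qed
  have e: "continuous_on ({0<..<\<rho>} \<times> S) (\<lambda>p. ee (snd p))"
    by (rule continuous_on_compose2[OF ee_cont]) (auto intro: continuous_intros)
  show ?thesis unfolding F_def split_beta
    by (intro continuous_intros o k e)
qed

lemma F_integral_zero:
  assumes "0 < r" "r < \<rho>"
  shows "(F n r has_integral 0) {0..2*pi}"
proof -
  have vd: "((\<lambda>\<theta>. g n (complex_of_real r * ee \<theta>)) has_vector_derivative
      (ofc (complex_of_real r * (\<i> * ee \<theta>)) * K n (complex_of_real r * ee \<theta>))) (at \<theta> within {0..2*pi})" for \<theta>
    using g_vderiv[OF vd_theta] in_disk[OF assms] by auto
  have "((\<lambda>\<theta>. ofc (complex_of_real r * (\<i> * ee \<theta>)) * K n (complex_of_real r * ee \<theta>)) has_integral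
      (g n (complex_of_real r * ee (2*pi)) - g n (complex_of_real r * ee 0))) {0..2*pi}"
    by (rule fundamental_theorem_of_calculus) (use vd in auto)
  then have "((\<lambda>\<theta>. ofc (complex_of_real r * (\<i> * ee \<theta>)) * K n (complex_of_real r * ee \<theta>)) has_integral 0) {0..2*pi}"
    by simp
  from has_integral_mult_right[OF this, of "ofc (inverse (complex_of_real r * \<i>))"]
  have "((\<lambda>\<theta>. ofc (inverse (complex_of_real r * \<i>)) * (ofc (complex_of_real r * (\<i> * ee \<theta>)) * K n (complex_of_real r * ee \<theta>))) has_integral 0) {0..2*pi}"
    by simp
  moreover have "ofc (inverse (complex_of_real r * \<i>)) * (ofc (complex_of_real r * (\<i> * ee \<theta>)) * K n (complex_of_real r * ee \<theta>)) = F n r \<theta>" for \<theta>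
  proof -
    have "inverse (complex_of_real r * \<i>) * (complex_of_real r * (\<i> * ee \<theta>)) = ee \<theta>"
      using assms by (simp add: field_simps)
    then show ?thesis unfolding F_def by (simp add: mult.assoc[symmetric] ofc_mult[symmetric])
  qed
  ultimately show ?thesis by simp
qed

lemma I_const: "\<exists>c. \<forall>r\<in>{0<..<\<rho>}. I n r = c"
proof (rule has_derivative_zero_constant)
  show "convex {0<..<\<rho>}" by simp
  fix r assume r: "r \<in> {0<..<\<rho>}"
  have "(I n has_vector_derivative integral (cbox 0 (2*pi)) (F n r)) (at r within {0<..<\<rho>})"
    unfolding I_def box_real(2)[symmetric]
  proof (rule leibniz_rule_vector_derivative[where fx="F n"])
    fix x t assume x: "x \<in> {0<..<\<rho>}" and "t \<in> cbox 0 (2*pi)"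
    show "((\<lambda>x. g n (complex_of_real x * ee t)) has_vector_derivative F n x t) (at x within {0<..<\<rho>})"
      unfolding F_def using g_vderiv[OF vd_r] in_disk x by auto
  next
    fix x assume x: "x \<in> {0<..<\<rho>}"
    show "(\<lambda>\<theta>. g n (complex_of_real x * ee \<theta>)) integrable_on cbox 0 (2*pi)"
      unfolding box_real(2) by (rule integrable_continuous_interval g_circ_cont)+ (use x in auto)
  next
    show "continuous_on ({0<..<\<rho>} \<times> cbox 0 (2*pi)) (\<lambda>(x, t). F n x t)" by (rule F_cont)
  qed (use r in auto)
  moreover have "integral (cbox 0 (2*pi)) (F n r) = 0"
    using F_integral_zero[of r n] r by (simp add: integral_unique)
  ultimately have "(I n has_vector_derivative 0) (at r within {0<..<\<rho>})" by simp
  then show "(I n has_derivative (\<lambda>h. 0)) (at r within {0<..<\<rho>})"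
    by (simp add: has_vector_derivative_def)
qed

end



lemma int_exp_zero:
  assumes "j \<noteq> 0"
  shows "((\<lambda>\<theta>. exp (- (\<i> * of_nat j) * complex_of_real \<theta>)) has_integral 0) {0..2*pi}"
proof -
  define c where "c = - (\<i> * of_nat j)"
  have c0: "c \<noteq> 0" using assms by (simp add: c_def)
  have vd: "((\<lambda>\<theta>. exp (c * complex_of_real \<theta>) / c) has_vector_derivative exp (c * complex_of_real \<theta>)) (at \<theta> within S)" for \<theta> S
  proof -
    have "((\<lambda>z. exp (c * z) / c) has_field_derivative exp (c * complex_of_real \<theta>)) (at (complex_of_real \<theta>))"
      by (rule derivative_eq_intros refl | use c0 in simp)+
    from has_vector_derivative_real_field[OF this] show ?thesis .
  qed
  have "((\<lambda>\<theta>. exp (c * complex_of_real \<theta>)) has_integral (exp (c * complex_of_real (2*pi)) / c - exp (c * complex_of_real 0) / c)) {0..2*pi}"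
    by (rule fundamental_theorem_of_calculus) (use vd in auto)
  moreover have "exp (c * complex_of_real (2*pi)) = 1"
  proof -
    have "c * complex_of_real (2*pi) = - (of_nat j * (2 * of_real pi * \<i>))" by (simp add: c_def)
    then have "exp (c * complex_of_real (2*pi)) = inverse (exp (2 * of_real pi * \<i>) ^ j)"
      by (simp only: exp_minus exp_of_nat_mult)
    then show ?thesis by simp
  qed
  ultimately show ?thesis by (simp add: c_def)
qed

lemma inv_circ_pow:
  "inverse (complex_of_real r * ee \<theta>) ^ j = complex_of_real (inverse r ^ j) * exp (- (\<i> * of_nat j) * complex_of_real \<theta>)"
proof -
  have "exp (- (\<i> * of_nat j) * complex_of_real \<theta>) = inverse (ee \<theta>) ^ j"
  proof -
    have "- (\<i> * of_nat j) * complex_of_real \<theta> = - (of_nat j * (\<i> * complex_of_real \<theta>))" by simp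
    then show ?thesis unfolding ee_def by (simp only: exp_minus exp_of_nat_mult power_inverse)
  qed
  then show ?thesis by (simp add: power_mult_distrib)
qed

lemma term_integral_zero:
  assumes "j \<noteq> 0"
  shows "((\<lambda>\<theta>. ofc (inverse (complex_of_real r * ee \<theta>) ^ j) * (y::'a::cstar_algebra)) has_integral 0) {0..2*pi}"
proof -
  have "((\<lambda>\<theta>. complex_of_real (inverse r ^ j) * exp (- (\<i> * of_nat j) * complex_of_real \<theta>)) has_integral 0) {0..2*pi}"
    using has_integral_mult_right[OF int_exp_zero[OF assms]] by simp
  then have "((\<lambda>\<theta>. inverse (complex_of_real r * ee \<theta>) ^ j) has_integral 0) {0..2*pi}"
    by (simp only: inv_circ_pow)
  from has_integral_linear[OF this bounded_linear_ofc_mult[of y]] show ?thesis by (simp add: o_def)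
qed

context gel begin

lemma Rv_expand:
  assumes "cmod \<mu> < \<rho>"
  shows "Rv \<mu> = (\<Sum>m<N. ofc (\<mu> ^ m) * x ^ m) + ofc (\<mu> ^ N) * x ^ N * Rv \<mu>"
proof -
  define z where "z = ofc \<mu> * x"
  have "(\<Sum>m<N. z ^ m) * (1 - z) * Rv \<mu> = (1 - z ^ N) * Rv \<mu>" by (simp add: geom_telescope)
  then have "(\<Sum>m<N. z ^ m) = Rv \<mu> - z ^ N * Rv \<mu>"
    using Rv(2)[OF assms] unfolding z_def by (simp add: mult.assoc left_diff_distrib)
  then show ?thesis unfolding z_def ofc_pow_comm by (simp add: algebra_simps)
qed

lemma g_expand:
  assumes "cmod \<mu> < \<rho>" "\<mu> \<noteq> 0"
  shows "g n \<mu> = (\<Sum>m<n. ofc (inverse \<mu> ^ (n - m)) * x ^ m) + x ^ n + ofc \<mu> * (x ^ Suc n * Rv \<mu>)"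
proof -
  have "g n \<mu> = ofc (inverse \<mu> ^ n) * ((\<Sum>m<Suc n. ofc (\<mu> ^ m) * x ^ m) + ofc (\<mu> ^ Suc n) * x ^ Suc n * Rv \<mu>)"
    unfolding g_def using Rv_expand[OF assms(1), of "Suc n"] by simp
  also have "\<dots> = (\<Sum>m<Suc n. ofc (inverse \<mu> ^ n * \<mu> ^ m) * x ^ m) + ofc (inverse \<mu> ^ n * \<mu> ^ Suc n) * (x ^ Suc n * Rv \<mu>)"
    by (simp add: distrib_left sum_distrib_left ofc_mult mult.assoc)
  also have "(\<Sum>m<Suc n. ofc (inverse \<mu> ^ n * \<mu> ^ m) * x ^ m) = (\<Sum>m<n. ofc (inverse \<mu> ^ (n - m)) * x ^ m) + x ^ n"
  proof -
    have "(\<Sum>m<n. ofc (inverse \<mu> ^ n * \<mu> ^ m) * x ^ m) = (\<Sum>m<n. ofc (inverse \<mu> ^ (n - m)) * x ^ m)"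
    proof (rule sum.cong[OF refl])
      fix m assume "m \<in> {..<n}"
      then have "n = (n - m) + m" by simp
      then have "inverse \<mu> ^ n * \<mu> ^ m = inverse \<mu> ^ (n - m) * (inverse \<mu> ^ m * \<mu> ^ m)"
        by (metis power_add mult.assoc)
      also have "inverse \<mu> ^ m * \<mu> ^ m = 1" using assms(2) by (simp add: power_mult_distrib[symmetric])
      finally have "inverse \<mu> ^ n * \<mu> ^ m = inverse \<mu> ^ (n - m)" by simp
      then show "ofc (inverse \<mu> ^ n * \<mu> ^ m) * x ^ m = ofc (inverse \<mu> ^ (n - m)) * x ^ m" by simp
    qed
    moreover have "inverse \<mu> ^ n * \<mu> ^ n = 1" using assms(2) by (simp add: power_mult_distrib[symmetric])
    ultimately show ?thesis by simp
  qed
  also have "inverse \<mu> ^ n * \<mu> ^ Suc n = \<mu>"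
    using assms(2) by (simp add: power_mult_distrib[symmetric] mult.assoc[symmetric])
  finally show ?thesis .
qed

definition E :: "nat \<Rightarrow> real \<Rightarrow> 'a" where
  "E n r = integral {0..2*pi} (\<lambda>\<theta>. ofc (complex_of_real r * ee \<theta>) * (x ^ Suc n * Rv (complex_of_real r * ee \<theta>)))"

lemma I_eq:
  assumes "0 < r" "r < \<rho>"
  shows "I n r = (2 * pi) *\<^sub>R x ^ n + E n r"
proof -
  have Rc: "continuous_on S (\<lambda>\<theta>. Rv (complex_of_real r * ee \<theta>))" for S
  proof (rule continuous_on_compose2[OF Rv_cont_on])
    show "continuous_on S (\<lambda>\<theta>. complex_of_real r * ee \<theta>)" by (intro continuous_intros ee_cont)
    show "(\<lambda>\<theta>. complex_of_real r * ee \<theta>) ` S \<subseteq> ball 0 \<rho>" using in_disk[OF assms] by auto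
  qed
  have o: "continuous_on S f \<Longrightarrow> continuous_on S (\<lambda>y. (ofc (f y) :: 'a))" for S f
    using bounded_linear.continuous_on[OF bounded_linear_ofc] by blast
  have "(\<lambda>\<theta>. ofc (complex_of_real r * ee \<theta>) * (x ^ Suc n * Rv (complex_of_real r * ee \<theta>))) integrable_on {0..2*pi}"
    by (intro integrable_continuous_interval continuous_intros o Rc ee_cont)
  then have hE: "((\<lambda>\<theta>. ofc (complex_of_real r * ee \<theta>) * (x ^ Suc n * Rv (complex_of_real r * ee \<theta>))) has_integral E n r) {0..2*pi}"
    unfolding E_def by (rule integrable_integral)
  have hS: "((\<lambda>\<theta>. \<Sum>m<n. ofc (inverse (complex_of_real r * ee \<theta>) ^ (n - m)) * x ^ m) has_integral (\<Sum>m<n. 0)) {0..2*pi}"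
    by (rule has_integral_sum) (simp, rule term_integral_zero, simp)
  have hC: "((\<lambda>\<theta>. x ^ n) has_integral (2 * pi) *\<^sub>R x ^ n) {0..2*pi}"
    using has_integral_const_real[of "x ^ n" 0 "2*pi"] by simp
  have "((\<lambda>\<theta>. (\<Sum>m<n. ofc (inverse (complex_of_real r * ee \<theta>) ^ (n - m)) * x ^ m) + x ^ n
        + ofc (complex_of_real r * ee \<theta>) * (x ^ Suc n * Rv (complex_of_real r * ee \<theta>)))
      has_integral ((\<Sum>m<n. 0) + (2 * pi) *\<^sub>R x ^ n + E n r)) {0..2*pi}"
    by (intro has_integral_add hS hC hE)
  moreover have "g n (complex_of_real r * ee \<theta>) = (\<Sum>m<n. ofc (inverse (complex_of_real r * ee \<theta>) ^ (n - m)) * x ^ m) + x ^ n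
        + ofc (complex_of_real r * ee \<theta>) * (x ^ Suc n * Rv (complex_of_real r * ee \<theta>))" for \<theta>
    using g_expand in_disk[OF assms, of \<theta>] by auto
  ultimately have "((\<lambda>\<theta>. g n (complex_of_real r * ee \<theta>)) has_integral ((2 * pi) *\<^sub>R x ^ n + E n r)) {0..2*pi}"
    by simp
  then show ?thesis unfolding I_def by (rule integral_unique)
qed

end



context gel begin

lemma Rv_circ_cont:
  assumes "0 < r" "r < \<rho>"
  shows "continuous_on S (\<lambda>\<theta>. Rv (complex_of_real r * ee \<theta>))"
proof (rule continuous_on_compose2[OF Rv_cont_on])
  show "continuous_on S (\<lambda>\<theta>. complex_of_real r * ee \<theta>)" by (intro continuous_intros ee_cont)
  show "(\<lambda>\<theta>. complex_of_real r * ee \<theta>) ` S \<subseteq> ball 0 \<rho>" using in_disk[OF assms] by auto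
qed

lemma E_bound:
  assumes "0 < r" "r < \<rho>" "r * norm x \<le> 1/2"
  shows "norm (E n r) \<le> 2 * r * norm (x ^ Suc n) * (2 * pi)"
proof -
  have o: "continuous_on S f \<Longrightarrow> continuous_on S (\<lambda>y. (ofc (f y) :: 'a))" for S f
    using bounded_linear.continuous_on[OF bounded_linear_ofc] by blast
  have "(\<lambda>\<theta>. ofc (complex_of_real r * ee \<theta>) * (x ^ Suc n * Rv (complex_of_real r * ee \<theta>))) integrable_on {0..2*pi}"
    by (intro integrable_continuous_interval continuous_intros o Rv_circ_cont[OF assms(1,2)] ee_cont)
  then have hE: "((\<lambda>\<theta>. ofc (complex_of_real r * ee \<theta>) * (x ^ Suc n * Rv (complex_of_real r * ee \<theta>))) has_integral E n r) {0..2*pi}"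
    unfolding E_def by (rule integrable_integral)
  have pt: "norm (ofc (complex_of_real r * ee \<theta>) * (x ^ Suc n * Rv (complex_of_real r * ee \<theta>))) \<le> 2 * r * norm (x ^ Suc n)" for \<theta>
  proof -
    let ?\<mu> = "complex_of_real r * ee \<theta>"
    have cm: "cmod ?\<mu> = r" using assms by (simp add: norm_mult)
    have "norm (Rv ?\<mu>) \<le> 2 * norm (Rv 0)"
      by (rule Rv_bound) (use cm assms rho_pos Rv0 in auto)
    then have rb: "norm (Rv ?\<mu>) \<le> 2" by (simp add: Rv0)
    have "norm (ofc ?\<mu> * (x ^ Suc n * Rv ?\<mu>)) = r * norm (x ^ Suc n * Rv ?\<mu>)" using cm by simp
    also have "\<dots> \<le> r * (norm (x ^ Suc n) * 2)"
      by (intro mult_left_mono order_trans[OF norm_mult_ineq]) (use rb assms in auto)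
    finally show ?thesis by (simp add: algebra_simps)
  qed
  have "norm (E n r) \<le> 2 * r * norm (x ^ Suc n) * Henstock_Kurzweil_Integration.content {0..2*pi}"
    by (rule has_integral_bound_real[OF _ _ hE, where S="{}"]) (use pt assms in auto)
  then show ?thesis by simp
qed

lemma I_val:
  assumes "0 < r" "r < \<rho>"
  shows "I n r = (2 * pi) *\<^sub>R x ^ n"
proof -
  obtain c where c: "\<And>r. r \<in> {0<..<\<rho>} \<Longrightarrow> I n r = c" using I_const[of n] by blast
  define b where "b = min \<rho> (1 / (2 * (norm x + 1)))"
  have nx: "0 \<le> norm x" by simp
  have b: "b > 0" using rho_pos by (simp add: b_def) (use nx in linarith)
  have ev: "\<forall>\<^sub>F r in at_right 0. 0 < r \<and> r < \<rho> \<and> r * norm x \<le> 1/2"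
    unfolding eventually_at_right_field
  proof (intro exI[of _ b] conjI allI impI)
    show "0 < b" by (rule b)
    fix r :: real assume r: "0 < r" "r < b"
    show "0 < r" using r by simp
    show "r < \<rho>" using r by (simp add: b_def)
    have "r \<le> 1 / (2 * (norm x + 1))" using r by (simp add: b_def)
    then have "r * norm x \<le> 1 / (2 * (norm x + 1)) * norm x" by (rule mult_right_mono) simp
    also have "\<dots> \<le> 1/2" by (simp add: divide_simps) (use nx in linarith)
    finally show "r * norm x \<le> 1/2" .
  qed
  have lim: "((\<lambda>r. 2 * r * norm (x ^ Suc n) * (2 * pi)) \<longlongrightarrow> 0) (at_right 0)"
    by (rule tendsto_eq_intros refl | simp)+
  have "((\<lambda>r. E n r) \<longlongrightarrow> 0) (at_right 0)"
    by (rule Lim_null_comparison[OF _ lim]) (use ev in \<open>auto elim!: eventually_mono dest!: E_bound[of _ n]\<close>)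
  moreover have "\<forall>\<^sub>F r in at_right 0. E n r = c - (2 * pi) *\<^sub>R x ^ n"
  proof (rule eventually_mono[OF ev])
    fix r assume r: "0 < r \<and> r < \<rho> \<and> r * norm x \<le> 1/2"
    then have "I n r = c" using c by auto
    then show "E n r = c - (2 * pi) *\<^sub>R x ^ n" using I_eq[of r n] r by (simp add: eq_diff_eq add.commute)
  qed
  ultimately have "((\<lambda>r. c - (2 * pi) *\<^sub>R x ^ n) \<longlongrightarrow> 0) (at_right (0::real))"
    by (simp add: tendsto_cong)
  then have "c - (2 * pi) *\<^sub>R x ^ n = 0" by (simp add: tendsto_const_iff)
  then show ?thesis using c assms by simp
qed

lemma gel_bound:
  assumes "0 < r" "r < \<rho>"
  shows "\<exists>B. \<forall>n. norm (x ^ n) * r ^ n \<le> B"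
proof -
  have "compact ((\<lambda>\<theta>. Rv (complex_of_real r * ee \<theta>)) ` {0..2*pi})"
    by (rule compact_continuous_image[OF Rv_circ_cont[OF assms]]) simp
  then obtain b where b: "b > 0" "\<And>\<theta>. \<theta> \<in> {0..2*pi} \<Longrightarrow> norm (Rv (complex_of_real r * ee \<theta>)) \<le> b"
    using compact_imp_bounded bounded_pos by (metis imageI)
  have "norm (x ^ n) * r ^ n \<le> b" for n
  proof -
    have "(\<lambda>\<theta>. g n (complex_of_real r * ee \<theta>)) integrable_on {0..2*pi}"
      by (rule integrable_continuous_interval g_circ_cont)+ (use assms in auto)
    then have hI: "((\<lambda>\<theta>. g n (complex_of_real r * ee \<theta>)) has_integral I n r) {0..2*pi}"
      unfolding I_def by (rule integrable_integral)
    have pt: "norm (g n (complex_of_real r * ee \<theta>)) \<le> inverse r ^ n * b" if "\<theta> \<in> {0..2*pi}" for \<theta>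
    proof -
      have "norm (g n (complex_of_real r * ee \<theta>)) = inverse r ^ n * norm (Rv (complex_of_real r * ee \<theta>))"
        unfolding g_def using assms by (simp add: norm_mult norm_power norm_inverse)
      also have "\<dots> \<le> inverse r ^ n * b" by (rule mult_left_mono[OF b(2)[OF that]]) (use assms in simp)
      finally show ?thesis .
    qed
    have "norm (I n r) \<le> inverse r ^ n * b * Henstock_Kurzweil_Integration.content {0..2*pi}"
      by (rule has_integral_bound_real[OF _ _ hI, where S="{}"]) (use pt b assms in auto)
    then have "2 * pi * norm (x ^ n) \<le> inverse r ^ n * b * (2 * pi)"
      using I_val[OF assms] by simp
    then have "norm (x ^ n) \<le> inverse r ^ n * b" by simp
    then have "norm (x ^ n) * r ^ n \<le> inverse r ^ n * b * r ^ n" by (rule mult_right_mono) (use assms in simp)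
    also have "\<dots> = b" using assms by (simp add: power_inverse field_simps)
    finally show ?thesis .
  qed
  then show ?thesis by blast
qed

end



lemma selfadj_norm_le:
  fixes h :: "'a::cstar_algebra"
  assumes sa: "cstar h = h" and s: "0 \<le> s"
    and sp: "\<And>l. s < cmod l \<Longrightarrow> isinv (h - ofc l)"
  shows "norm h \<le> s"
proof (rule ccontr)
  assume "\<not> norm h \<le> s"
  then have Ms: "s < norm h" by simp
  define M where "M = norm h"
  have M0: "M > 0" unfolding M_def using Ms s by linarith
  define \<rho> where "\<rho> = 2 / (M + s)"
  define r where "r = 4 / (3 * M + s)"
  have rho0: "\<rho> > 0" using M0 s by (simp add: \<rho>_def)
  have r0: "r > 0" using M0 s by (simp add: r_def)
  have rrho: "r < \<rho>" using M0 s Ms M_def by (simp add: r_def \<rho>_def divide_simps)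
  have Mr: "M * r > 1" using M0 s Ms M_def by (simp add: r_def divide_simps)
  interpret G: gel h \<rho>
  proof
    show "\<rho> > 0" by (rule rho0)
    fix \<mu> :: complex assume mu: "cmod \<mu> < \<rho>"
    show "isinv (1 - ofc \<mu> * h)"
    proof (cases "\<mu> = 0")
      case True then show ?thesis by simp
    next
      case False
      have "cmod (inverse \<mu>) > s"
      proof -
        have "cmod (inverse \<mu>) = 1 / cmod \<mu>" by (metis norm_inverse inverse_eq_divide)
        also have "1 / cmod \<mu> > 1 / \<rho>" using mu False rho0 by (intro divide_strict_left_mono) auto
        finally have "cmod (inverse \<mu>) > (M + s) / 2" by (simp add: \<rho>_def)
        moreover have "(M + s) / 2 > s" using Ms M_def by simp
        ultimately show ?thesis by linarith
      qed
      then have "isinv (h - ofc (inverse \<mu>))" by (rule sp)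
      then have "isinv (ofc (- \<mu>) * (h - ofc (inverse \<mu>)))"
        by (intro isinv_mult isinv_ofc) (use False in auto)
      moreover have "ofc (- \<mu>) * (h - ofc (inverse \<mu>)) = 1 - ofc \<mu> * h"
      proof -
        have "ofc (- \<mu>) * ofc (inverse \<mu>) = (- 1 :: 'a)"
          using ofc_inverse[OF False, where 'a='a] by (simp add: ofc_minus)
        then show ?thesis by (simp add: right_diff_distrib ofc_minus)
      qed
      ultimately show ?thesis by simp
    qed
  qed
  obtain B where B: "\<And>n. norm (h ^ n) * r ^ n \<le> B" using G.gel_bound[OF r0 rrho] by blast
  obtain j where j: "B < (M * r) ^ j" using real_arch_pow[OF Mr] by blast
  have "(M * r) ^ j \<le> (M * r) ^ (2 ^ j)"
    by (rule power_increasing) (use Mr less_exp[of j] in auto)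
  also have "\<dots> = norm (h ^ (2 ^ j)) * r ^ (2 ^ j)"
    using norm_selfadj_pow2[OF sa, of j] by (simp add: M_def power_mult_distrib)
  also have "\<dots> \<le> B" by (rule B)
  finally show False using j by simp
qed

lemma cstar_of_real[simp]: "cstar (of_real t) = (of_real t :: 'a::cstar_algebra)"
  by (metis ofc_of_real cstar_ofc complex_cnj_complex_of_real)

lemma spec_not_inv: "l \<in> cspectrum (a::'a::cstar_algebra) \<longleftrightarrow> \<not> isinv (a - ofc l)"
  unfolding cspectrum_def isinv_def ofc_def by simp

lemma pos_char:
  fixes a :: "'a::cstar_algebra"
  assumes "cpositive a"
  shows "norm (ofc (complex_of_real (norm a)) - a) \<le> norm a"
proof (rule selfadj_norm_le)
  have sa: "cstar a = a" using assms by (simp add: cpositive_def)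
  show "cstar (ofc (complex_of_real (norm a)) - a) = ofc (complex_of_real (norm a)) - a"
    using sa by (simp add: cstar_diff cstar_ofc)
  show "0 \<le> norm a" by simp
  fix l assume l: "norm a < cmod l"
  have eq: "ofc (complex_of_real (norm a)) - a - ofc l = - (a - ofc (complex_of_real (norm a) - l))"
    by (simp add: ofc_diff)
  show "isinv (ofc (complex_of_real (norm a)) - a - ofc l)"
    unfolding eq
  proof (rule isinv_minus, rule ccontr)
    assume ni: "\<not> isinv (a - ofc (complex_of_real (norm a) - l))"
    then have "complex_of_real (norm a) - l \<in> cspectrum a" by (simp add: spec_not_inv)
    then obtain u where u: "u \<ge> 0" "complex_of_real (norm a) - l = complex_of_real u"
      using assms unfolding cpositive_def by auto
    have "\<not> norm a < cmod (complex_of_real (norm a) - l)" using ni isinv_shift by blast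
    then have "u \<le> norm a" using u by simp
    have "l = complex_of_real (norm a - u)" using u by (simp add: algebra_simps)
    then have "cmod l = norm a - u" using \<open>u \<le> norm a\<close> by (simp only: norm_of_real)
    then show False using l u by simp
  qed
qed

lemma norm_mono:
  fixes a b :: "'a::cstar_algebra"
  assumes a: "cpositive a" and ab: "cle a b"
  shows "norm a \<le> norm b"
proof (rule selfadj_norm_le)
  show sa: "cstar a = a" using a by (simp add: cpositive_def)
  show "0 \<le> norm b" by simp
  define y where "y = b - a"
  have y: "cpositive y" using ab by (simp add: cle_def y_def)
  define s where "s = norm y"
  define w where "w = ofc (complex_of_real s) - y"
  have w: "norm w \<le> s" unfolding w_def s_def by (rule pos_char[OF y])
  fix l assume l: "norm b < cmod l"
  show "isinv (a - ofc l)"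
  proof (rule ccontr)
    assume ni: "\<not> isinv (a - ofc l)"
    then have "l \<in> cspectrum a" by (simp add: spec_not_inv)
    then obtain u where u: "u \<ge> 0" "l = complex_of_real u"
      using a unfolding cpositive_def by auto
    have "norm (b + w) < cmod (complex_of_real (u + s))"
    proof -
      have "norm (b + w) \<le> norm b + s" using w norm_triangle_ineq[of b w] by linarith
      also have "\<dots> < u + s" using l u by simp
      moreover have "cmod (complex_of_real (u + s)) = u + s" using u s_def by (simp only: norm_of_real) simp
      ultimately show ?thesis by simp
    qed
    then have "isinv ((b + w) - ofc (complex_of_real (u + s)))" by (rule isinv_shift)
    moreover have "(b + w) - ofc (complex_of_real (u + s)) = a - ofc l"
      unfolding w_def y_def u(2) by (simp add: ofc_add algebra_simps)
    ultimately show False using ni by simp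
  qed
qed




lemma fp_funpow: "f u = u \<Longrightarrow> (f ^^ n) u = u"
  by (induction n) auto

lemma metric_tri:
  assumes "cstar_metric (d :: 'x \<Rightarrow> 'x \<Rightarrow> 'a::cstar_algebra)"
  shows "norm (d x z) \<le> norm (d x y) + norm (d y z)"
proof -
  have "norm (d x z) \<le> norm (d x y + d y z)"
    by (rule norm_mono) (use assms in \<open>auto simp: cstar_metric_def\<close>)
  also have "\<dots> \<le> norm (d x y) + norm (d y z)" by (rule norm_triangle_ineq)
  finally show ?thesis .
qed

lemma metric_sym: "cstar_metric d \<Longrightarrow> d x y = d y x"
  by (simp add: cstar_metric_def)

lemma metric_zero: "cstar_metric d \<Longrightarrow> norm (d x y) = 0 \<Longrightarrow> x = y"
  by (simp add: cstar_metric_def)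

lemma metric_lim_unique:
  assumes m: "cstar_metric (d :: 'x \<Rightarrow> 'x \<Rightarrow> 'a::cstar_algebra)"
    and "(\<lambda>i. norm (d (s i) p)) \<longlonglongrightarrow> 0" "(\<lambda>i. norm (d (s i) q)) \<longlonglongrightarrow> 0"
  shows "p = q"
proof -
  have "(\<lambda>i. norm (d (s i) p) + norm (d (s i) q)) \<longlonglongrightarrow> 0 + 0" by (intro tendsto_add assms)
  moreover have "\<forall>i. norm (d p q) \<le> norm (d (s i) p) + norm (d (s i) q)"
  proof
    fix i
    have "norm (d p q) \<le> norm (d p (s i)) + norm (d (s i) q)" by (rule metric_tri[OF m])
    then show "norm (d p q) \<le> norm (d (s i) p) + norm (d (s i) q)" using metric_sym[OF m, of p "s i"] by simp
  qed
  ultimately have "norm (d p q) \<le> 0" using LIMSEQ_le_const by fastforce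
  then show ?thesis using metric_zero[OF m] by (simp add: order_antisym)
qed

lemma geo_cauchy:
  assumes m: "cstar_metric (d :: 'x \<Rightarrow> 'x \<Rightarrow> 'a::cstar_algebra)"
    and k: "0 \<le> k" "k < 1" and C: "0 \<le> C"
    and step: "\<And>n. n \<ge> 1 \<Longrightarrow> norm (d (s n) (s (Suc n))) \<le> C * k ^ n"
  shows "\<forall>e>0. \<exists>N. \<forall>n\<ge>N. \<forall>m\<ge>N. norm (d (s n) (s m)) < e"
proof -
  have b1: "norm (d (s n) (s (n + m))) * (1 - k) \<le> C * k ^ n" if "n \<ge> 1" for n m
  proof -
    have "norm (d (s n) (s (n + m))) \<le> C * k ^ n * (\<Sum>i<m. k ^ i)"
    proof (induction m)
      case 0 then show ?case using m by (simp add: cstar_metric_def)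
    next
      case (Suc m)
      have "norm (d (s n) (s (n + Suc m))) \<le> norm (d (s n) (s (n + m))) + norm (d (s (n + m)) (s (Suc (n + m))))"
        using metric_tri[OF m] by simp
      also have "\<dots> \<le> C * k ^ n * (\<Sum>i<m. k ^ i) + C * k ^ (n + m)"
        using Suc step[of "n + m"] that by (intro add_mono) auto
      also have "\<dots> = C * k ^ n * (\<Sum>i<Suc m. k ^ i)" by (simp add: algebra_simps power_add)
      finally show ?case .
    qed
    then have "norm (d (s n) (s (n + m))) * (1 - k) \<le> C * k ^ n * ((\<Sum>i<m. k ^ i) * (1 - k))"
      using k by (simp add: mult_right_mono mult.assoc)
    also have "(\<Sum>i<m. k ^ i) * (1 - k) = 1 - k ^ m" by (rule geom_telescope)
    also have "C * k ^ n * (1 - k ^ m) \<le> C * k ^ n" using k C by (simp add: mult_left_le)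
    finally show ?thesis .
  qed
  show ?thesis
  proof (intro allI impI)
    fix e :: real assume e: "e > 0"
    obtain N0 where N0: "k ^ N0 < e * (1 - k) / (C + 1)"
      using real_arch_pow_inv[of "e * (1 - k) / (C + 1)" k] e k C by auto
    define N where "N = Suc N0"
    have kN: "C * k ^ n < e * (1 - k)" if "n \<ge> N" for n
    proof -
      have "k ^ n \<le> k ^ N0" using that k by (intro power_decreasing) (auto simp: N_def)
      then have "(C + 1) * k ^ n \<le> (C + 1) * k ^ N0" using C by (intro mult_left_mono) auto
      also have "(C + 1) * k ^ N0 < e * (1 - k)" using N0 C by (simp add: pos_less_divide_eq mult.commute)
      finally have "(C + 1) * k ^ n < e * (1 - k)" .
      moreover have "C * k ^ n \<le> (C + 1) * k ^ n" using k by (intro mult_right_mono) auto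
      ultimately show ?thesis by linarith
    qed
    have main: "norm (d (s n) (s m)) < e" if "n \<ge> N" "m \<ge> n" for n m
    proof -
      have "norm (d (s n) (s (n + (m - n)))) * (1 - k) \<le> C * k ^ n"
        by (rule b1) (use that in \<open>auto simp: N_def\<close>)
      then have "norm (d (s n) (s m)) * (1 - k) < e * (1 - k)" using kN[OF that(1)] that by simp
      then show ?thesis using k by simp
    qed
    show "\<exists>N. \<forall>n\<ge>N. \<forall>m\<ge>N. norm (d (s n) (s m)) < e"
    proof (intro exI[of _ N] allI impI)
      fix n m assume "n \<ge> N" "m \<ge> N"
      then show "norm (d (s n) (s m)) < e"
      proof (cases "n \<le> m")
        case True then show ?thesis using main \<open>n \<ge> N\<close> by blast
      next
        case False
        then have "norm (d (s m) (s n)) < e" using main \<open>m \<ge> N\<close> by simp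
        then show ?thesis using metric_sym[OF m, of "s m" "s n"] by simp
      qed
    qed
  qed
qed

theorem corollary3p21:
  fixes d :: "'x \<Rightarrow> 'x \<Rightarrow> 'a::cstar_algebra"
    and T S :: "'x \<Rightarrow> 'x"
    and q \<delta> :: "'x \<Rightarrow> 'x \<Rightarrow> 'a"
  assumes "cstar_metric d"
    and "cstar_complete d"
    and "\<And>x y. cpositive_central (q x y)"
    and "\<And>x y. norm (q x y) < 1"
    and "\<And>x y. cpositive (\<delta> x y)"
    and "\<And>x y n. n \<ge> 1 \<Longrightarrow> cle (d ((T ^^ n) x) (((S \<circ> T) ^^ n) y)) ((q x y) ^ n * \<delta> x y)"
    and "orbitally_continuous d T"
    and "orbitally_continuous d (S \<circ> T)"
  shows "\<exists>!u. T u = u \<and> S u = u"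
proof -
  note m = assms(1)
  have H: "norm (d ((T ^^ n) x) (((S \<circ> T) ^^ n) y)) \<le> norm (q x y) ^ n * norm (\<delta> x y)" if "n \<ge> 1" for x y n
  proof -
    have "norm (d ((T ^^ n) x) (((S \<circ> T) ^^ n) y)) \<le> norm ((q x y) ^ n * \<delta> x y)"
      by (rule norm_mono) (use m assms(6)[OF that] in \<open>simp add: cstar_metric_def\<close>)+
    also have "\<dots> \<le> norm (q x y) ^ n * norm (\<delta> x y)"
      by (rule order_trans[OF norm_mult_ineq]) (simp add: mult_right_mono norm_power_ineq)
    finally show ?thesis .
  qed
  obtain x0 :: 'x where True by blast
  define a where "a n = (T ^^ n) x0" for n
  define b where "b n = ((S \<circ> T) ^^ n) x0" for n
  define k where "k = max (norm (q x0 x0)) (norm (q (T x0) x0))"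
  define C where "C = norm (\<delta> x0 x0) + norm (\<delta> (T x0) x0)"
  have k: "0 \<le> k" "k < 1" using assms(4) by (auto simp: k_def le_max_iff_disj)
  have C: "0 \<le> C" by (simp add: C_def)
  have ab: "norm (d (a n) (b n)) \<le> k ^ n * norm (\<delta> x0 x0)" if "n \<ge> 1" for n
    using H[OF that, of x0 x0] unfolding a_def b_def
    by (rule order_trans) (intro mult_right_mono power_mono, auto simp: k_def)
  have ab1: "norm (d (a (Suc n)) (b n)) \<le> k ^ n * norm (\<delta> (T x0) x0)" if "n \<ge> 1" for n
    using H[OF that, of "T x0" x0] unfolding a_def b_def funpow_Suc_right o_def
    by (rule order_trans) (intro mult_right_mono power_mono, auto simp: k_def)
  have step: "norm (d (a n) (a (Suc n))) \<le> C * k ^ n" if "n \<ge> 1" for n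
  proof -
    have "norm (d (a n) (a (Suc n))) \<le> norm (d (a n) (b n)) + norm (d (b n) (a (Suc n)))"
      by (rule metric_tri[OF m])
    also have "\<dots> \<le> k ^ n * norm (\<delta> x0 x0) + k ^ n * norm (\<delta> (T x0) x0)"
      using ab[OF that] ab1[OF that] metric_sym[OF m, of "b n"] by (intro add_mono) auto
    finally show ?thesis by (simp add: C_def algebra_simps)
  qed
  have "\<forall>e>0. \<exists>N. \<forall>n\<ge>N. \<forall>m\<ge>N. norm (d (a n) (a m)) < e"
    by (rule geo_cauchy[OF m k C step])
  then obtain u where u: "(\<lambda>n. norm (d (a n) u)) \<longlonglongrightarrow> 0"
    using assms(2) unfolding cstar_complete_def by blast
  have kpow: "(\<lambda>n. k ^ n * norm (\<delta> x0 x0)) \<longlonglongrightarrow> 0"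
    using tendsto_mult[OF LIMSEQ_power_zero[of k] tendsto_const[of "norm (\<delta> x0 x0)"]] k by simp
  have bu: "(\<lambda>n. norm (d (b n) u)) \<longlonglongrightarrow> 0"
  proof -
    have lim': "(\<lambda>n. k ^ n * norm (\<delta> x0 x0) + norm (d (a n) u)) \<longlonglongrightarrow> 0"
      using tendsto_add[OF kpow u] by simp
    have bd: "\<forall>n\<ge>1. norm (norm (d (b n) u)) \<le> k ^ n * norm (\<delta> x0 x0) + norm (d (a n) u)"
    proof (intro allI impI)
      fix n :: nat assume "n \<ge> 1"
      have "norm (d (b n) u) \<le> norm (d (b n) (a n)) + norm (d (a n) u)" by (rule metric_tri[OF m])
      then show "norm (norm (d (b n) u)) \<le> k ^ n * norm (\<delta> x0 x0) + norm (d (a n) u)"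
        using ab[OF \<open>n \<ge> 1\<close>] metric_sym[OF m, of "b n"] by simp
    qed
    show ?thesis
      by (rule Lim_null_comparison[OF _ lim']) (use bd in \<open>auto simp: eventually_sequentially\<close>)
  qed
  have sm: "strict_mono (Suc :: nat \<Rightarrow> nat)" by (simp add: strict_mono_Suc_iff)
  have Tu: "T u = u"
  proof -
    have l1: "(\<lambda>i. norm (d ((T ^^ Suc i) x0) u)) \<longlonglongrightarrow> 0" using LIMSEQ_Suc[OF u] unfolding a_def .
    have oc: "orbitally_continuous_at d T u" using assms(7) unfolding orbitally_continuous_def by blast
    have "(\<lambda>i. norm (d ((T ^^ (Suc i + 1)) x0) (T u))) \<longlonglongrightarrow> 0"
      by (rule oc[unfolded orbitally_continuous_at_def, rule_format, OF sm zero_less_Suc l1])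
    then have "(\<lambda>i. norm (d (a (Suc (Suc i))) (T u))) \<longlonglongrightarrow> 0" by (simp add: a_def)
    moreover have "(\<lambda>i. norm (d (a (Suc (Suc i))) u)) \<longlonglongrightarrow> 0" using LIMSEQ_Suc[OF LIMSEQ_Suc[OF u]] .
    ultimately show ?thesis by (rule metric_lim_unique[OF m])
  qed
  have Su: "S u = u"
  proof -
    have l1: "(\<lambda>i. norm (d (((S \<circ> T) ^^ Suc i) x0) u)) \<longlonglongrightarrow> 0" using LIMSEQ_Suc[OF bu] unfolding b_def .
    have oc: "orbitally_continuous_at d (S \<circ> T) u" using assms(8) unfolding orbitally_continuous_def by blast
    have "(\<lambda>i. norm (d (((S \<circ> T) ^^ (Suc i + 1)) x0) ((S \<circ> T) u))) \<longlonglongrightarrow> 0"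
      by (rule oc[unfolded orbitally_continuous_at_def, rule_format, OF sm zero_less_Suc l1])
    then have "(\<lambda>i. norm (d (b (Suc (Suc i))) (S u))) \<longlonglongrightarrow> 0" by (simp add: b_def Tu)
    moreover have "(\<lambda>i. norm (d (b (Suc (Suc i))) u)) \<longlonglongrightarrow> 0" using LIMSEQ_Suc[OF LIMSEQ_Suc[OF bu]] .
    ultimately show ?thesis by (rule metric_lim_unique[OF m])
  qed
  show ?thesis
  proof (rule ex1I[of _ u])
    show "T u = u \<and> S u = u" using Tu Su by simp
    fix v assume v: "T v = v \<and> S v = v"
    have STv: "(S \<circ> T) v = v" using v by simp
    have bnd: "norm (d u v) \<le> norm (q u v) ^ n * norm (\<delta> u v)" if "n \<ge> 1" for n
      using H[OF that, of u v] fp_funpow[of T u n] fp_funpow[of "S \<circ> T" v n] Tu STv by simp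
    have lim: "(\<lambda>n. norm (q u v) ^ n * norm (\<delta> u v)) \<longlonglongrightarrow> 0"
      using tendsto_mult[OF LIMSEQ_power_zero[of "norm (q u v)"] tendsto_const[of "norm (\<delta> u v)"]] assms(4)[of u v] by simp
    have "norm (d u v) \<le> 0"
      by (rule LIMSEQ_le_const[OF lim]) (use bnd in auto)
    then show "v = u" using metric_zero[OF m, of u v] by (simp add: order_antisym)
  qed
qed



end
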